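(* Let $(X,d)$ be a compact metric space with the $E_{1,0}$-property. Then the intrinsic distance $d_I:X\times X\to\mathbb{R}$ is well defined (finite-valued) and continuous.
   Context: $(X,d)$ has the $E_{1,0}$-property if for every nonempty open $\Omega\subsetneq X$ there is a continuous $u:\overline\Omega\to\mathbb{R}$ with $s[u](x)=1$ for all $x\in\Omega$ and $u=0$ on $\partial\Omega$, where the local slope is $s[u](\bar x):=\limsup_{x\to\bar x}\frac{\max\{u(\bar x)-u(x),0\}}{d(\bar x,x)}$ (zero if $\bar x$ isolated), computed in $\overline\Omega$. The intrinsic distance $d_I(x,y)$ is the infimum of lengths of continuous curves joining $x$ and $y$ (length $=\sup\sum_i d(\gamma(t_i),\gamma(t_{i+1}))$ over partitions), with $\inf\emptyset=+\infty$. *)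

theory Defs
  imports "HOL-Analysis.Analysis" "HOL-Library.Liminf_Limsup"
begin

definition local_slope :: "'a::metric_space set \<Rightarrow> ('a \<Rightarrow> real) \<Rightarrow> 'a \<Rightarrow> ereal" where
  "local_slope S u xb =
     (if at xb within S = bot then 0
      else Limsup (at xb within S) (\<lambda>x. ereal (max (u xb - u x) 0 / dist xb x)))"

definition E10_property :: "'a::metric_space itself \<Rightarrow> bool" where
  "E10_property TYPE('a) \<longleftrightarrow>
     (\<forall>\<Omega> :: 'a set. open \<Omega> \<and> \<Omega> \<noteq> {} \<and> \<Omega> \<noteq> UNIV \<longrightarrow>
        (\<exists>u :: 'a \<Rightarrow> real. continuous_on (closure \<Omega>) u \<and>
            (\<forall>x\<in>\<Omega>. local_slope (closure \<Omega>) u x = 1) \<and>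
            (\<forall>x\<in>frontier \<Omega>. u x = 0)))"

definition curve_length :: "(real \<Rightarrow> 'a::metric_space) \<Rightarrow> ereal" where
  "curve_length g =
     (SUP (n, t) \<in> {(n :: nat, t :: nat \<Rightarrow> real).
                     t 0 = 0 \<and> t n = 1 \<and> (\<forall>i<n. t i \<le> t (Suc i))}.
        ereal (\<Sum>i<n. dist (g (t i)) (g (t (Suc i)))))"

text \<open>Intrinsic distance; Inf of the empty set is +infinity.\<close>
definition intrinsic_dist :: "'a::metric_space \<Rightarrow> 'a \<Rightarrow> ereal" where
  "intrinsic_dist x y =
     (INF g \<in> {g :: real \<Rightarrow> 'a. continuous_on {0..1} g \<and> g 0 = x \<and> g 1 = y}.
        curve_length g)"

end

theory Submission
  imports Defs
begin


lemma fun_compact: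
  assumes "compact (UNIV :: 'a::metric_space set)"
  shows "compact (UNIV :: ('b \<Rightarrow> 'a) set)"
proof -
  have "compact_space (euclidean :: 'a topology)"
    using assms by (simp add: compact_space_def)
  then have "compact_space (product_topology (\<lambda>i::'b. euclidean :: 'a topology) UNIV)"
    by (simp add: compact_space_product_topology)
  then show ?thesis by (simp add: euclidean_product_topology compact_space_def)
qed

lemma slope_step:
  fixes u :: "'a::metric_space \<Rightarrow> real"
  assumes "local_slope UNIV u b = 1" "eventually P (at b)"
  shows "\<exists>z. P z \<and> z \<noteq> b \<and> dist b z < 2 * (u b - u z)"
proof (rule ccontr)
  assume H: "\<not> ?thesis"
  have nb: "at b \<noteq> bot"
    using assms(1) unfolding local_slope_def by (auto split: if_splits)
  have "eventually (\<lambda>z. ereal (max (u b - u z) 0 / dist b z) \<le> ereal (1/2)) (at b)"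
    using assms(2) eventually_at_topological
  proof -
    have "eventually (\<lambda>z. P z \<and> z \<noteq> b) (at b)"
      using assms(2) by (simp add: eventually_conj_iff eventually_at_filter)
    then show ?thesis
    proof (rule eventually_mono)
      fix z assume z: "P z \<and> z \<noteq> b"
      then have "\<not> dist b z < 2 * (u b - u z)" using H by blast
      moreover have "dist b z > 0" using z by auto
      ultimately have "max (u b - u z) 0 \<le> dist b z / 2" unfolding max_def by (auto simp: algebra_simps)
      then have "max (u b - u z) 0 / dist b z \<le> 1/2"
        using \<open>dist b z > 0\<close> by (simp add: divide_le_eq)
      then show "ereal (max (u b - u z) 0 / dist b z) \<le> ereal (1/2)" by simp
    qed
  qed
  then have "Limsup (at b) (\<lambda>z. ereal (max (u b - u z) 0 / dist b z)) \<le> ereal (1/2)"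
    by (rule Limsup_bounded)
  moreover have "Limsup (at b) (\<lambda>z. ereal (max (u b - u z) 0 / dist b z)) = 1"
    using assms(1) nb unfolding local_slope_def by (simp split: if_splits)
  ultimately show False by simp
qed

locale descent =
  fixes u :: "'a::metric_space \<Rightarrow> real" and x :: 'a
  assumes cpt: "compact (UNIV :: 'a set)"
    and cont: "continuous_on UNIV u"
    and ux: "u x = 0"
    and slope: "\<And>b. b \<noteq> x \<Longrightarrow> local_slope UNIV u b = 1"
begin

definition R where "R p q \<longleftrightarrow> dist p q \<le> 2 * (u p - u q)"

lemma R_refl: "R p p" by (simp add: R_def)

lemma R_trans: assumes "R p q" "R q r" shows "R p r"
proof -
  have "dist p r \<le> dist p q + dist q r" by (rule dist_triangle)
  then show ?thesis using assms unfolding R_def by (simp add: algebra_simps)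
qed

lemma R_antisym: "R p q \<Longrightarrow> u p = u q \<Longrightarrow> p = q"
  unfolding R_def by simp

lemma lower: assumes "b \<noteq> x" shows "\<exists>z. u z < u b"
proof -
  obtain z where "dist b z < 2 * (u b - u z)"
    using slope_step[OF slope[OF assms], of "\<lambda>_. True"] by auto
  moreover have "0 \<le> dist b z" by simp
  ultimately have "u z < u b" by (smt (verit))
  then show ?thesis by blast
qed

lemma u_nonneg: "0 \<le> u p"
proof -
  obtain m where m: "\<forall>y. u m \<le> u y"
    using continuous_attains_inf[OF cpt _ cont] by auto
  have "m = x" using lower m by (meson not_le)
  then show ?thesis using m ux by auto
qed

lemma u_zero: assumes "u p = 0" shows "p = x"
proof (rule ccontr)
  assume "p \<noteq> x"
  then obtain z where "u z < u p" using lower by blast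
  then show False using u_nonneg[of z] assms by simp
qed

lemma level:
  assumes "0 \<le> c" "c \<le> u p"
  shows "\<exists>q. R p q \<and> u q = c"
proof -
  define K where "K = {q. dist p q \<le> 2 * (u p - u q) \<and> c \<le> u q}"
  have cu: "continuous_on UNIV (\<lambda>q. 2 * (u p - u q))"
    by (intro continuous_intros cont)
  have "closed K" unfolding K_def
    by (intro closed_Collect_conj closed_Collect_le cu cont continuous_intros) 
  then have "compact K" using cpt compact_Int_closed[OF cpt] by simp
  moreover have "p \<in> K" using assms by (simp add: K_def)
  ultimately obtain b where b: "b \<in> K" "\<forall>y\<in>K. u b \<le> u y"
    using continuous_attains_inf[of K u] continuous_on_subset[OF cont] by blast
  show ?thesis
  proof (cases "u b = c")
    case True then show ?thesis using b by (auto simp: K_def R_def)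
  next
    case False
    then have gt: "u b > c" using b by (auto simp: K_def)
    then have "b \<noteq> x" using ux assms by auto
    have "eventually (\<lambda>z. u z > c) (at b)"
      using cont gt by (metis UNIV_I continuous_on_def order_tendstoD(1))
    then obtain z where z: "u z > c" "z \<noteq> b" "dist b z < 2 * (u b - u z)"
      using slope_step[OF slope[OF \<open>b \<noteq> x\<close>]] by blast
    have "R p z" using R_trans[of p b z] b z by (auto simp: K_def R_def)
    then have "z \<in> K" using z by (auto simp: K_def R_def)
    moreover have "u z < u b" using z zero_le_dist[of b z] by (smt (verit))
    ultimately show ?thesis using b by force
  qed
qed

lemma finite_chain:
  assumes "finite F"
  shows "\<forall>p. F \<subseteq> {0..u p} \<longrightarrow> (\<exists>f. \<forall>c\<in>F. u (f c) = c \<and> R p (f c) \<and>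
            (\<forall>c'\<in>F. c' \<le> c \<longrightarrow> R (f c) (f c')))"
  using assms
proof (induction F rule: finite_linorder_max_induct)
  case empty then show ?case by auto
next
  case (insert b A)
  show ?case
  proof (intro allI impI)
    fix p assume sub: "insert b A \<subseteq> {0..u p}"
    then obtain q where q: "R p q" "u q = b" using level by auto
    have "A \<subseteq> {0..u q}" using sub insert.hyps q by fastforce
    then obtain f where f: "\<forall>c\<in>A. u (f c) = c \<and> R q (f c) \<and>
            (\<forall>c'\<in>A. c' \<le> c \<longrightarrow> R (f c) (f c'))" using insert.IH by blast
    define g where "g = f(b := q)"
    have bA: "b \<notin> A" using insert.hyps by auto
    show "\<exists>f. \<forall>c\<in>insert b A. u (f c) = c \<and> R p (f c) \<and>
            (\<forall>c'\<in>insert b A. c' \<le> c \<longrightarrow> R (f c) (f c'))"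
    proof (intro exI ballI conjI impI)
      fix c assume c: "c \<in> insert b A"
      show "u (g c) = c" using c f q bA by (auto simp: g_def)
      show "R p (g c)" using c f q bA R_trans by (auto simp: g_def)
      fix c' assume "c' \<in> insert b A" "c' \<le> c"
      then show "R (g c) (g c')" using c f q bA insert.hyps R_refl
        by (auto simp: g_def)
    qed
  qed
qed


lemma full_chain:
  "\<exists>f. f (u a) = a \<and> (\<forall>c\<in>{0..u a}. u (f c) = c) \<and>
     (\<forall>c\<in>{0..u a}. \<forall>c'\<in>{0..u a}. c' \<le> c \<longrightarrow> R (f c) (f c'))"
proof -
  define U where "U = u a"
  define I where "I = {0..U} \<times> {0..U}"
  define A where "A = (\<lambda>(c::real, c'::real). {f::real \<Rightarrow> 'a. f U = a} \<inter> {f. u (f c) = c} \<inter>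
      (if c' \<le> c then {f. dist (f c) (f c') \<le> 2 * (u (f c) - u (f c'))} else UNIV))"
  have ev: "continuous_on UNIV (\<lambda>f::real \<Rightarrow> 'a. f c)" for c by simp
  have evu: "continuous_on UNIV (\<lambda>f::real \<Rightarrow> 'a. u (f c))" for c
    by (rule continuous_on_compose2[OF cont ev]) auto
  have "UNIV \<inter> \<Inter>(A ` I) \<noteq> {}"
  proof (rule compact_imp_fip[OF fun_compact[OF cpt]])
    fix T assume "T \<in> A ` I"
    then obtain c c' where T: "T = A (c, c')" by auto
    have c1: "closed {f::real \<Rightarrow> 'a. f U = a}"
      by (rule closed_Collect_eq) (auto intro: ev)
    have c2: "closed {f::real \<Rightarrow> 'a. u (f c) = c}"
      by (rule closed_Collect_eq) (auto intro: evu)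
    have c3: "closed {f::real \<Rightarrow> 'a. dist (f c) (f c') \<le> 2 * (u (f c) - u (f c'))}"
      by (rule closed_Collect_le) (intro continuous_intros evu ev continuous_on_dist)+
    show "closed T" unfolding T A_def using c1 c2 c3 by auto
  next
    fix F' assume F': "finite F'" "F' \<subseteq> A ` I"
    then obtain C where C: "C \<subseteq> I" "finite C" "F' = A ` C"
      using finite_subset_image by metis
    define L where "L = insert U (fst ` C \<union> snd ` C)"
    have "finite L" using C by (simp add: L_def)
    moreover have "L \<subseteq> {0..u a}" using C u_nonneg[of a] by (auto simp: L_def I_def U_def)
    ultimately obtain f where f: "\<forall>c\<in>L. u (f c) = c \<and> R a (f c) \<and>
            (\<forall>c'\<in>L. c' \<le> c \<longrightarrow> R (f c) (f c'))"
      using finite_chain by blast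
    have fU: "f U = a"
    proof -
      have "u (f U) = u a" "R a (f U)" using f by (auto simp: L_def U_def)
      then show ?thesis unfolding R_def by simp
    qed
    have "f \<in> \<Inter> F'"
    proof
      fix T assume "T \<in> F'"
      then obtain c c' where cc: "(c, c') \<in> C" "T = A (c, c')" using C by auto
      then have "c \<in> L" "c' \<in> L" by (force simp: L_def)+
      then have "u (f c) = c" "c' \<le> c \<longrightarrow> R (f c) (f c')" using f by auto
      then show "f \<in> T" using cc fU unfolding A_def R_def by auto
    qed
    then show "UNIV \<inter> \<Inter> F' \<noteq> {}" by blast
  qed
  then obtain f where f: "\<forall>i\<in>I. f \<in> A i" by blast
  show ?thesis
  proof (intro exI conjI ballI impI)
    have "(U, U) \<in> I" using u_nonneg[of a] by (simp add: I_def U_def)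
    then show "f (u a) = a" using f by (auto simp: A_def U_def)
    fix c assume c: "c \<in> {0..u a}"
    then have "(c, c) \<in> I" by (simp add: I_def U_def)
    then show "u (f c) = c" using f by (auto simp: A_def)
    fix c' assume c': "c' \<in> {0..u a}" "c' \<le> c"
    then have "(c, c') \<in> I" using c by (simp add: I_def U_def)
    then show "R (f c) (f c')" using f c' by (auto simp: A_def R_def)
  qed
qed

lemma chain_lip:
  assumes "\<forall>c\<in>{0..u a}. u (f c) = c"
    "\<forall>c\<in>{0..u a}. \<forall>c'\<in>{0..u a}. c' \<le> c \<longrightarrow> R (f c) (f c')"
    "c \<in> {0..u a}" "c' \<in> {0..u a}"
  shows "dist (f c) (f c') \<le> 2 * \<bar>c - c'\<bar>"
proof (cases "c' \<le> c")
  case True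
  then have "R (f c) (f c')" using assms by blast
  then show ?thesis using assms True unfolding R_def by auto
next
  case False
  then have "R (f c') (f c)" using assms by auto
  then show ?thesis using assms False unfolding R_def by (auto simp: dist_commute)
qed

lemma chain_zero:
  assumes "\<forall>c\<in>{0..u a}. u (f c) = c"
  shows "f 0 = x"
  using assms u_nonneg[of a] u_zero by auto

end


lemma part_mono:
  assumes "\<forall>i<n. t i \<le> t (Suc i)" "i \<le> j" "j \<le> n"
  shows "t i \<le> (t j :: real)"
  using assms(2,3)
proof (induction j)
  case 0 then show ?case by simp
next
  case (Suc j)
  show ?case
  proof (cases "i = Suc j")
    case True then show ?thesis by simp
  next
    case False
    then have "i \<le> j" using Suc by simp
    then have "t i \<le> t j" using Suc by simp
    also have "t j \<le> t (Suc j)" using assms(1) Suc by simp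
    finally show ?thesis .
  qed
qed

lemma curve_length_nonneg: "0 \<le> curve_length g"
proof -
  have "(1::nat, \<lambda>i::nat. if i = 0 then 0 else (1::real)) \<in> {(n :: nat, t :: nat \<Rightarrow> real).
                     t 0 = 0 \<and> t n = 1 \<and> (\<forall>i<n. t i \<le> t (Suc i))}" by auto
  then have "ereal (\<Sum>i<1. dist (g ((\<lambda>i::nat. if i = 0 then 0 else (1::real)) i))
      (g ((\<lambda>i::nat. if i = 0 then 0 else (1::real)) (Suc i)))) \<le> curve_length g"
    unfolding curve_length_def by (rule SUP_upper2) auto
  then have "ereal (dist (g 0) (g 1)) \<le> curve_length g" by simp
  moreover have "0 \<le> ereal (dist (g 0) (g 1))" by simp
  ultimately show ?thesis by (rule order_trans[rotated])
qed

lemma lip_length: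
  assumes lip: "\<forall>s\<in>{0..1}. \<forall>t\<in>{0..1}. dist (g s) (g t) \<le> L * dist s t" and L: "0 \<le> L"
  shows "curve_length g \<le> ereal L"
  unfolding curve_length_def
proof (rule SUP_least)
  fix p assume "p \<in> {(n :: nat, t :: nat \<Rightarrow> real). t 0 = 0 \<and> t n = 1 \<and> (\<forall>i<n. t i \<le> t (Suc i))}"
  then obtain n t where p: "p = (n, t)" "t 0 = 0" "t n = 1" "\<forall>i<n. t i \<le> t (Suc i)" by auto
  have rng: "i \<le> n \<Longrightarrow> t i \<in> {0..1}" for i
    using part_mono[OF p(4), of 0 i] part_mono[OF p(4), of i n] p by auto
  have "(\<Sum>i<n. dist (g (t i)) (g (t (Suc i)))) \<le> (\<Sum>i<n. L * (t (Suc i) - t i))"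
  proof (rule sum_mono)
    fix i assume "i \<in> {..<n}"
    then have "dist (g (t i)) (g (t (Suc i))) \<le> L * dist (t i) (t (Suc i))"
      using lip rng[of i] rng[of "Suc i"] by auto
    also have "\<dots> = L * (t (Suc i) - t i)" using p(4) \<open>i \<in> {..<n}\<close> by (simp add: dist_real_def)
    finally show "dist (g (t i)) (g (t (Suc i))) \<le> L * (t (Suc i) - t i)" .
  qed
  also have "\<dots> = L * (t n - t 0)"
    by (simp add: sum_distrib_left[symmetric] sum_lessThan_telescope)
  also have "\<dots> = L" using p by simp
  finally show "(case p of (n, t) \<Rightarrow> ereal (\<Sum>i<n. dist (g (t i)) (g (t (Suc i))))) \<le> ereal L"
    using p by simp
qed

lemma lip_cont:
  assumes lip: "\<forall>s\<in>{0..1}. \<forall>t\<in>{0..1}. dist (g s) (g t) \<le> L * dist s t" and L: "0 \<le> L"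
  shows "continuous_on {0..1} g"
  by (rule lipschitz_on_continuous_on[of L]) (use assms in \<open>auto simp: lipschitz_on_def\<close>)

lemma dI_le: "continuous_on {0..1} g \<Longrightarrow> g 0 = a \<Longrightarrow> g 1 = b \<Longrightarrow> intrinsic_dist a b \<le> curve_length g"
  unfolding intrinsic_dist_def by (rule INF_lower) auto

lemma dI_nonneg: "0 \<le> intrinsic_dist a b"
  unfolding intrinsic_dist_def by (rule INF_greatest) (rule curve_length_nonneg)



lemma sum_split_add: "(\<Sum>i<a + b. f i) = (\<Sum>i<a. f i) + (\<Sum>j<b. f (a + j)) "
  for f :: "nat \<Rightarrow> real"
  by (induction b) (auto simp: add.assoc)

lemma part_in: "t 0 = 0 \<Longrightarrow> t n = 1 \<Longrightarrow> (\<forall>i<n. t i \<le> t (Suc i)) \<Longrightarrow>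
  ereal (\<Sum>i<n. dist (g (t i)) (g (t (Suc i)))) \<le> curve_length g"
  unfolding curve_length_def by (rule SUP_upper2[where i="(n,t)"]) auto

lemma join_length:
  assumes m12: "g1 1 = g2 0"
  shows "curve_length (g1 +++ g2) \<le> curve_length g1 + curve_length g2"
  unfolding curve_length_def[of "g1 +++ g2"]
proof (rule SUP_least)
  define h where "h = g1 +++ g2"
  fix p assume "p \<in> {(n :: nat, t :: nat \<Rightarrow> real). t 0 = 0 \<and> t n = 1 \<and> (\<forall>i<n. t i \<le> t (Suc i))}"
  then obtain n t where p: "p = (n, t)" "t 0 = 0" "t n = 1" and mono: "\<forall>i<n. t i \<le> t (Suc i)" by auto
  have "n \<noteq> 0" using p by (metis zero_neq_one)
  define k where "k = (LEAST i. 1/2 < t (Suc i))"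
  have ex: "1/2 < t (Suc (n - 1))" using p \<open>n \<noteq> 0\<close> by simp
  have "k \<le> n - 1" unfolding k_def by (rule Least_le) (rule ex)
  then have kn: "k < n" using \<open>n \<noteq> 0\<close> by simp
  have tk1: "1/2 < t (Suc k)" unfolding k_def by (rule LeastI) (rule ex)
  have low: "t i \<le> 1/2" if "i \<le> k" for i
  proof (cases i)
    case 0 then show ?thesis using p by simp
  next
    case (Suc i')
    then have "i' < k" using that by simp
    then show ?thesis unfolding Suc k_def using not_less_Least by (metis not_less)
  qed
  have high: "1/2 < t i" if "Suc k \<le> i" "i \<le> n" for i
    using tk1 part_mono[OF mono that] by simp
  define m where "m = n - Suc k"
  have nm: "n = Suc k + m" using kn by (simp add: m_def)
  define F where "F i = dist (h (t i)) (h (t (Suc i)))" for i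
  have split: "(\<Sum>i<n. F i) = (\<Sum>i<k. F i) + F k + (\<Sum>j<m. F (Suc k + j))"
    unfolding nm sum_split_add by simp
  define s1 where "s1 i = (if i \<le> k then 2 * t i else 1)" for i
  define s2 where "s2 j = (if j = 0 then 0 else 2 * t (k + j) - 1)" for j
  have S1: "ereal (\<Sum>i<Suc k. dist (g1 (s1 i)) (g1 (s1 (Suc i)))) \<le> curve_length g1"
  proof (rule part_in)
    show "s1 0 = 0" using p by (simp add: s1_def)
    show "s1 (Suc k) = 1" by (simp add: s1_def)
    show "\<forall>i<Suc k. s1 i \<le> s1 (Suc i)"
    proof (intro allI impI)
      fix i assume "i < Suc k"
      then show "s1 i \<le> s1 (Suc i)" using mono kn low[of i] by (auto simp: s1_def)
    qed
  qed
  have S2: "ereal (\<Sum>j<Suc m. dist (g2 (s2 j)) (g2 (s2 (Suc j)))) \<le> curve_length g2"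
  proof (rule part_in)
    show "s2 0 = 0" by (simp add: s2_def)
    show "s2 (Suc m) = 1" using p nm by (simp add: s2_def)
    show "\<forall>i<Suc m. s2 i \<le> s2 (Suc i)"
    proof (intro allI impI)
      fix i assume i: "i < Suc m"
      show "s2 i \<le> s2 (Suc i)"
      proof (cases "i = 0")
        case True then show ?thesis using tk1 by (simp add: s2_def)
      next
        case False
        then have "k + i < n" using i nm by simp
        then have "t (k + i) \<le> t (Suc (k + i))" using mono by simp
        then show ?thesis using False by (simp add: s2_def)
      qed
    qed
  qed
  have e1: "(\<Sum>i<Suc k. dist (g1 (s1 i)) (g1 (s1 (Suc i)))) = (\<Sum>i<k. F i) + dist (g1 (2 * t k)) (g1 1)"
  proof -
    have "(\<Sum>i<k. dist (g1 (s1 i)) (g1 (s1 (Suc i)))) = (\<Sum>i<k. F i)"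
    proof (rule sum.cong)
      fix i assume "i \<in> {..<k}"
      then have "t i \<le> 1/2" "t (Suc i) \<le> 1/2" using low by auto
      then show "dist (g1 (s1 i)) (g1 (s1 (Suc i))) = F i" using \<open>i \<in> {..<k}\<close>
        by (simp add: s1_def F_def h_def joinpaths_def)
    qed simp
    then show ?thesis by (simp add: s1_def)
  qed
  have e2: "(\<Sum>j<Suc m. dist (g2 (s2 j)) (g2 (s2 (Suc j)))) = dist (g2 0) (g2 (2 * t (Suc k) - 1)) + (\<Sum>j<m. F (Suc k + j))"
  proof -
    have "(\<Sum>j<m. dist (g2 (s2 (Suc j))) (g2 (s2 (Suc (Suc j))))) = (\<Sum>j<m. F (Suc k + j))"
    proof (rule sum.cong)
      fix j assume j: "j \<in> {..<m}"
      then have "1/2 < t (Suc k + j)" "1/2 < t (Suc (Suc k + j))" using high nm by auto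
      then show "dist (g2 (s2 (Suc j))) (g2 (s2 (Suc (Suc j)))) = F (Suc k + j)"
        by (simp add: s2_def F_def h_def joinpaths_def)
    qed simp
    then show ?thesis unfolding sum.lessThan_Suc_shift by (simp add: s2_def del: sum.lessThan_Suc)
  qed
  have Fk: "F k \<le> dist (g1 (2 * t k)) (g1 1) + dist (g2 0) (g2 (2 * t (Suc k) - 1))"
  proof -
    have "F k = dist (g1 (2 * t k)) (g2 (2 * t (Suc k) - 1))"
      using low[of k] tk1 by (simp add: F_def h_def joinpaths_def)
    also have "\<dots> \<le> dist (g1 (2 * t k)) (g1 1) + dist (g1 1) (g2 (2 * t (Suc k) - 1))"
      by (rule dist_triangle)
    finally show ?thesis using m12 by simp
  qed
  have "(\<Sum>i<n. F i) \<le> (\<Sum>i<Suc k. dist (g1 (s1 i)) (g1 (s1 (Suc i)))) +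
          (\<Sum>j<Suc m. dist (g2 (s2 j)) (g2 (s2 (Suc j))))"
    unfolding split e1 e2 using Fk by simp
  then have "ereal (\<Sum>i<n. F i) \<le> ereal (\<Sum>i<Suc k. dist (g1 (s1 i)) (g1 (s1 (Suc i)))) +
          ereal (\<Sum>j<Suc m. dist (g2 (s2 j)) (g2 (s2 (Suc j))))" by simp
  also have "\<dots> \<le> curve_length g1 + curve_length g2" using S1 S2 by (rule add_mono)
  finally show "(case p of (n, t) \<Rightarrow> ereal (\<Sum>i<n. dist ((g1 +++ g2) (t i)) ((g1 +++ g2) (t (Suc i)))))
        \<le> curve_length g1 + curve_length g2"
    using p by (simp add: F_def h_def)
qed



lemma dI_approx:
  assumes "intrinsic_dist a b < \<infinity>" "0 < e"
  shows "\<exists>g. continuous_on {0..1} g \<and> g 0 = a \<and> g 1 = b \<and> curve_length g < intrinsic_dist a b + ereal e"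
proof -
  have "intrinsic_dist a b \<noteq> -\<infinity>" using dI_nonneg[of a b] by auto
  then have "intrinsic_dist a b < intrinsic_dist a b + ereal e"
    using assms by (cases "intrinsic_dist a b") auto
  then show ?thesis unfolding intrinsic_dist_def[of a b] by (subst (asm) INF_less_iff) auto
qed

lemma dI_triangle: "intrinsic_dist a c \<le> intrinsic_dist a b + intrinsic_dist b c"
proof (cases "intrinsic_dist a b < \<infinity> \<and> intrinsic_dist b c < \<infinity>")
  case False
  then have "intrinsic_dist a b = \<infinity> \<or> intrinsic_dist b c = \<infinity>" by (auto simp: less_top[symmetric])
  then have "intrinsic_dist a b + intrinsic_dist b c = \<infinity>"
    using dI_nonneg[of a b] dI_nonneg[of b c]
    by (cases "intrinsic_dist a b"; cases "intrinsic_dist b c") auto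
  then show ?thesis by (metis top_ereal_def top_greatest)
next
  case True
  show ?thesis
  proof (rule ereal_le_epsilon2)
    fix e :: real assume e: "0 < e"
    obtain g1 where g1: "continuous_on {0..1} g1" "g1 0 = a" "g1 1 = b"
        "curve_length g1 < intrinsic_dist a b + ereal (e/2)"
      using dI_approx[of a b "e/2"] True e by auto
    obtain g2 where g2: "continuous_on {0..1} g2" "g2 0 = b" "g2 1 = c"
        "curve_length g2 < intrinsic_dist b c + ereal (e/2)"
      using dI_approx[of b c "e/2"] True e by auto
    have "continuous_on {0..1} (g1 +++ g2)"
      using g1 g2 path_join[of g1 g2] by (simp add: path_def pathstart_def pathfinish_def)
    moreover have "(g1 +++ g2) 0 = a" "(g1 +++ g2) 1 = c" using g1 g2 by (auto simp: joinpaths_def)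
    ultimately have "intrinsic_dist a c \<le> curve_length (g1 +++ g2)" by (rule dI_le)
    also have "\<dots> \<le> curve_length g1 + curve_length g2" using g1 g2 by (intro join_length) simp
    also have "\<dots> \<le> (intrinsic_dist a b + ereal (e/2)) + (intrinsic_dist b c + ereal (e/2))"
      using g1 g2 by (intro add_mono) auto
    also have "\<dots> = intrinsic_dist a b + intrinsic_dist b c + ereal e"
      using True dI_nonneg[of a b] dI_nonneg[of b c]
      by (cases "intrinsic_dist a b"; cases "intrinsic_dist b c") (auto simp: ereal_less_eq)
    finally show "intrinsic_dist a c \<le> intrinsic_dist a b + intrinsic_dist b c + ereal e" .
  qed
qed

context descent begin

lemma two_curve:
  "\<exists>g. continuous_on {0..1} g \<and> g 0 = a \<and> g 1 = b \<and> curve_length g \<le> ereal (2 * (u a + u b))"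
proof -
  obtain fa where fa: "fa (u a) = a" "\<forall>c\<in>{0..u a}. u (fa c) = c"
     "\<forall>c\<in>{0..u a}. \<forall>c'\<in>{0..u a}. c' \<le> c \<longrightarrow> R (fa c) (fa c')"
    using full_chain[of a] by blast
  obtain fb where fb: "fb (u b) = b" "\<forall>c\<in>{0..u b}. u (fb c) = c"
     "\<forall>c\<in>{0..u b}. \<forall>c'\<in>{0..u b}. c' \<le> c \<longrightarrow> R (fb c) (fb c')"
    using full_chain[of b] by blast
  have la: "dist (fa c) (fa c') \<le> 2 * \<bar>c - c'\<bar>" if "c \<in> {0..u a}" "c' \<in> {0..u a}" for c c'
    using chain_lip[OF fa(2,3) that] .
  have lb: "dist (fb c) (fb c') \<le> 2 * \<bar>c - c'\<bar>" if "c \<in> {0..u b}" "c' \<in> {0..u b}" for c c'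
    using chain_lip[OF fb(2,3) that] .
  have a0: "fa 0 = x" using chain_zero[OF fa(2)] .
  have b0: "fb 0 = x" using chain_zero[OF fb(2)] .
  have ua: "0 \<le> u a" and ub: "0 \<le> u b" using u_nonneg by auto
  define phi where "phi s = (if 0 \<le> s then fa s else fb (- s))" for s
  have lphi: "dist (phi s) (phi s') \<le> 2 * \<bar>s - s'\<bar>" if "s \<in> {- u b..u a}" "s' \<in> {- u b..u a}" for s s'
  proof (cases "0 \<le> s"; cases "0 \<le> s'")
    assume "0 \<le> s" "0 \<le> s'" then show ?thesis using la that by (simp add: phi_def)
  next
    assume "\<not> 0 \<le> s" "\<not> 0 \<le> s'" then show ?thesis using lb[of "-s" "-s'"] that by (simp add: phi_def abs_minus_commute)
  next
    assume s: "0 \<le> s" "\<not> 0 \<le> s'"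
    have "dist (fa s) (fb (- s')) \<le> dist (fa s) (fa 0) + dist (fb 0) (fb (-s'))"
      using dist_triangle[of "fa s" "fb (-s')" x] a0 b0 by (simp add: dist_commute)
    also have "\<dots> \<le> 2 * \<bar>s - 0\<bar> + 2 * \<bar>0 - (-s')\<bar>"
      using la[of s 0] lb[of 0 "-s'"] that s ua ub by (intro add_mono) auto
    also have "\<dots> = 2 * \<bar>s - s'\<bar>" using s by simp
    finally show ?thesis using s by (simp add: phi_def)
  next
    assume s: "\<not> 0 \<le> s" "0 \<le> s'"
    have "dist (fb (- s)) (fa s') \<le> dist (fb (-s)) (fb 0) + dist (fa 0) (fa s')"
      using dist_triangle[of "fb (-s)" "fa s'" x] a0 b0 by (simp add: dist_commute)
    also have "\<dots> \<le> 2 * \<bar>-s - 0\<bar> + 2 * \<bar>0 - s'\<bar>"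
      using la[of 0 s'] lb[of "-s" 0] that s ua ub by (intro add_mono) auto
    also have "\<dots> = 2 * \<bar>s - s'\<bar>" using s by simp
    finally show ?thesis using s by (simp add: phi_def)
  qed
  define W where "W = u a + u b"
  define g where "g t = phi (u a - t * W)" for t
  have W0: "0 \<le> W" using ua ub by (simp add: W_def)
  have lip: "\<forall>s\<in>{0..1}. \<forall>t\<in>{0..1}. dist (g s) (g t) \<le> (2 * W) * dist s t"
  proof (intro ballI)
    fix s t :: real assume s: "s \<in> {0..1}" and t: "t \<in> {0..1}"
    have rng: "u a - r * W \<in> {- u b..u a}" if "r \<in> {0..1}" for r
    proof -
      have "r * W \<le> 1 * W" using that W0 by (intro mult_right_mono) auto
      moreover have "0 \<le> r * W" using that W0 by simp
      ultimately show ?thesis by (simp add: W_def)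
    qed
    have "dist (g s) (g t) \<le> 2 * \<bar>(u a - s * W) - (u a - t * W)\<bar>"
      unfolding g_def by (rule lphi[OF rng[OF s] rng[OF t]])
    also have "\<bar>(u a - s * W) - (u a - t * W)\<bar> = W * \<bar>s - t\<bar>"
      using W0 by (simp add: abs_mult left_diff_distrib[symmetric] right_diff_distrib[symmetric] mult.commute abs_minus_commute)
    finally show "dist (g s) (g t) \<le> (2 * W) * dist s t" by (simp add: dist_real_def)
  qed
  show ?thesis
  proof (intro exI conjI)
    show "continuous_on {0..1} g" using lip W0 by (intro lip_cont[of g "2*W"]) auto
    show "g 0 = a" using ua fa by (simp add: g_def phi_def)
    show "g 1 = b"
    proof (cases "u b = 0")
      case True
      then have "b = x" using u_zero by simp
      then show ?thesis using True ua a0 u_zero[of a] fa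
        by (cases "u a = 0") (auto simp: g_def phi_def W_def)
    next
      case False
      then show ?thesis using ub fb by (simp add: g_def phi_def W_def)
    qed
    show "curve_length g \<le> ereal (2 * (u a + u b))"
      using lip_length[OF lip] W0 by (simp add: W_def)
  qed
qed

lemma dI_bound: "intrinsic_dist a b \<le> ereal (2 * (u a + u b))"
  using two_curve[of a b] dI_le by (meson order_trans)

end


lemma get_u:
  assumes cpt: "compact (UNIV :: 'a::metric_space set)" and E: "E10_property TYPE('a)"
  shows "\<exists>u. continuous_on UNIV u \<and> u (x::'a) = 0 \<and> (\<forall>a b. intrinsic_dist a b \<le> ereal (2 * (u a + u b)))"
proof (cases "\<exists>y::'a. y \<noteq> x")
  case False
  then have all: "\<And>z::'a. z = x" by blast
  have "intrinsic_dist a b \<le> ereal 0" for a b :: 'a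
  proof -
    have "intrinsic_dist a b \<le> curve_length (\<lambda>_::real. x)"
      by (rule dI_le) (auto simp: all[of a] all[of b])
    also have "\<dots> \<le> ereal 0" by (rule lip_length) auto
    finally show ?thesis .
  qed
  then show ?thesis by (intro exI[of _ "\<lambda>_. 0"]) auto
next
  case True
  then obtain y where y: "y \<noteq> x" by blast
  have E': "\<And>\<Omega>::'a set. open \<Omega> \<Longrightarrow> \<Omega> \<noteq> {} \<Longrightarrow> \<Omega> \<noteq> UNIV \<Longrightarrow>
        (\<exists>u :: 'a \<Rightarrow> real. continuous_on (closure \<Omega>) u \<and>
            (\<forall>x\<in>\<Omega>. local_slope (closure \<Omega>) u x = 1) \<and>
            (\<forall>x\<in>frontier \<Omega>. u x = 0))"
    using E unfolding E10_property_def by blast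
  have noiso: "\<not> open {z}" for z :: 'a
  proof
    assume o: "open {z}"
    have "{z} \<noteq> (UNIV :: 'a set)" using y by (metis UNIV_I singletonD)
    then obtain u where u: "local_slope (closure {z}) u z = 1" using E'[OF o] by auto
    have "at z within {z} = bot" by (simp add: at_within_eq_bot_iff)
    then have "local_slope (closure {z}) u z = 0" by (simp add: local_slope_def)
    then show False using u by simp
  qed
  define \<Omega> where "\<Omega> = - {x}"
  have o: "open \<Omega>" by (simp add: \<Omega>_def open_Compl)
  have ne: "\<Omega> \<noteq> {}" using y by (auto simp: \<Omega>_def)
  have nu: "\<Omega> \<noteq> UNIV" by (auto simp: \<Omega>_def)
  have cl: "closure \<Omega> = UNIV"
  proof -
    have "x islimpt UNIV" using noiso islimpt_UNIV_iff by blast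
    then have "x islimpt \<Omega>" unfolding \<Omega>_def using islimpt_punctured[of x UNIV]
      by (simp add: Compl_eq_Diff_UNIV)
    then have "x \<in> closure \<Omega>" by (simp add: closure_def)
    then show ?thesis by (auto simp: \<Omega>_def closure_def)
  qed
  have fr: "frontier \<Omega> = {x}" using o cl by (auto simp: frontier_def interior_open \<Omega>_def)
  obtain u where u: "continuous_on UNIV u" "\<forall>z\<in>\<Omega>. local_slope UNIV u z = 1" "u x = 0"
    using E'[OF o ne nu] cl fr by auto
  interpret descent u x
    by unfold_locales (use cpt u in \<open>auto simp: \<Omega>_def\<close>)
  show ?thesis using u dI_bound by blast
qed

theorem proposition5p2:
  assumes "compact (UNIV :: 'a::metric_space set)"
    and "E10_property TYPE('a)"
  shows "(\<forall>x y :: 'a. intrinsic_dist x y < \<infinity>) \<and>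
         continuous_on UNIV (\<lambda>p :: 'a \<times> 'a. real_of_ereal (intrinsic_dist (fst p) (snd p)))"
proof -
  have U: "\<And>x::'a. \<exists>u. continuous_on UNIV u \<and> u x = 0 \<and> (\<forall>a b. intrinsic_dist a b \<le> ereal (2 * (u a + u b)))"
    using get_u[OF assms] by blast
  have fin: "intrinsic_dist a b < \<infinity>" for a b :: 'a
  proof -
    obtain u where "\<forall>a b :: 'a. intrinsic_dist a b \<le> ereal (2 * (u a + u b))" using U[of a] by metis
    then have "intrinsic_dist a b \<le> ereal (2 * (u a + u b))" by blast
    moreover have "ereal (2 * (u a + u b)) < \<infinity>" by simp
    ultimately show ?thesis by (rule le_less_trans)
  qed
  define Dr where "Dr a b = real_of_ereal (intrinsic_dist a b)" for a b :: 'a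
  have Deq: "intrinsic_dist a b = ereal (Dr a b)" for a b
    using fin[of a b] dI_nonneg[of a b] unfolding Dr_def by (cases "intrinsic_dist a b") auto
  have tri: "Dr a c \<le> Dr a b + Dr b c" for a b c
    using dI_triangle[of a c b] unfolding Deq by simp
  have bnd: "\<exists>u. continuous_on UNIV u \<and> u x = 0 \<and> (\<forall>a b. Dr a b \<le> 2 * (u a + u b))" for x
  proof -
    obtain u where "continuous_on UNIV u" "u x = 0" "\<forall>a b. intrinsic_dist a b \<le> ereal (2 * (u a + u b))"
      using U[of x] by blast
    then show ?thesis unfolding Deq by auto
  qed
  have near: "\<exists>d>0. \<forall>p. dist p x < d \<longrightarrow> Dr p x < e \<and> Dr x p < e" if e: "0 < e" for x e
  proof -
    obtain u where u: "continuous_on UNIV u" "u x = 0" "\<forall>a b. Dr a b \<le> 2 * (u a + u b)"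
      using bnd[of x] by blast
    obtain d where d: "d > 0" "\<forall>p. dist p x < d \<longrightarrow> dist (u p) (u x) < e / 2"
      using u(1) e unfolding continuous_on_iff by (metis UNIV_I half_gt_zero)
    show ?thesis
    proof (intro exI conjI allI impI)
      fix p assume "dist p x < d"
      then have "\<bar>u p\<bar> < e / 2" using d u(2) by (auto simp: dist_real_def)
      then show "Dr p x < e" "Dr x p < e" using u(2) u(3)[rule_format, of p x] u(3)[rule_format, of x p] by auto
    qed (use d in auto)
  qed
  have cont: "continuous_on UNIV (\<lambda>p :: 'a \<times> 'a. Dr (fst p) (snd p))"
    unfolding continuous_on_iff
  proof (intro ballI allI impI)
    fix z :: "'a \<times> 'a" and e :: real assume e: "0 < e"
    obtain x y where z: "z = (x, y)" by (cases z)
    obtain d1 where d1: "d1 > 0" "\<forall>p. dist p x < d1 \<longrightarrow> Dr p x < e/4 \<and> Dr x p < e/4"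
      using near[of "e/4" x] e by auto
    obtain d2 where d2: "d2 > 0" "\<forall>p. dist p y < d2 \<longrightarrow> Dr p y < e/4 \<and> Dr y p < e/4"
      using near[of "e/4" y] e by auto
    show "\<exists>d>0. \<forall>z'\<in>UNIV. dist z' z < d \<longrightarrow> dist (Dr (fst z') (snd z')) (Dr (fst z) (snd z)) < e"
    proof (intro exI conjI ballI impI)
      show "0 < min d1 d2" using d1 d2 by simp
      fix z' :: "'a \<times> 'a" assume "dist z' z < min d1 d2"
      obtain p q where z': "z' = (p, q)" by (cases z')
      have "dist p x < d1" using dist_fst_le[of z' z] \<open>dist z' z < min d1 d2\<close> z z' by auto
      then have px: "Dr p x < e/4" "Dr x p < e/4" using d1 by auto
      have "dist q y < d2" using dist_snd_le[of z' z] \<open>dist z' z < min d1 d2\<close> z z' by auto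
      then have qy: "Dr q y < e/4" "Dr y q < e/4" using d2 by auto
      have "Dr p q \<le> Dr p x + Dr x y + Dr y q" using tri[of p q x] tri[of x q y] by linarith
      moreover have "Dr x y \<le> Dr x p + Dr p q + Dr q y" using tri[of x y p] tri[of p y q] by linarith
      ultimately show "dist (Dr (fst z') (snd z')) (Dr (fst z) (snd z)) < e"
        using px qy z z' by (auto simp: dist_real_def abs_less_iff)
    qed
  qed
  show ?thesis using fin cont unfolding Dr_def by blast
qed


end
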